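(* Let $P$ be a finite set of points in $\mathbb{R}^m$ and let $(A,B)$ be an optimal 2-means partition of $P$ with $|A|\ge|B|$. Then at least $\frac{4}{7}|A|$ points of $A$ are high-revenue points (with respect to the split $P\to(A,B)$). Consequently $rev(A,B)\ge\frac{1}{35}|A||B|$.
   Context: Distances are Euclidean: $d(x,y)=\|x-y\|_2$. For finite nonempty $S$, $\rho(S)=\frac{1}{|S|}\sum_{u\in S}u$ and $\Delta_1(S)=\sum_{u\in S}d(u,\rho(S))^2$. A partition $(A,B)$ of $P$ into two nonempty sets is an optimal 2-means partition if it minimizes $\Delta_1(A)+\Delta_1(B)$ among all partitions of $P$ into two nonempty sets. For $i\in A$, $j\in B$, $rev(i,j)=\min\{d(i,j)/\max\{d(i,\rho(A)),d(j,\rho(B))\},\,1\}$ (equal to $1$ if the maximum is $0$), and $rev(A,B)=\sum_{i\in A}\sum_{j\in B}rev(i,j)$. For $u\in A$, the high-revenue set is $HR_B(u)=\{v\in B: rev(u,v)\ge\frac{1}{10}\}$ and the low-revenue set is $LR_B(u)=B\setminus HR_B(u)$. A point $u\in A$ is a high-revenue point if $|HR_B(u)|\ge\frac12|B|$, and a low-revenue point otherwise. *)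

theory Defs
  imports "HOL-Analysis.Analysis"
begin

definition centroid :: "'a::euclidean_space set \<Rightarrow> 'a" where
  "centroid S = (1 / real (card S)) *\<^sub>R (\<Sum>u\<in>S. u)"

definition cost1 :: "'a::euclidean_space set \<Rightarrow> real" where
  "cost1 S = (\<Sum>u\<in>S. (dist u (centroid S))\<^sup>2)"

definition two_partition :: "'a set \<Rightarrow> 'a set \<Rightarrow> 'a set \<Rightarrow> bool" where
  "two_partition P A B \<longleftrightarrow> A \<noteq> {} \<and> B \<noteq> {} \<and> A \<inter> B = {} \<and> A \<union> B = P"

definition optimal_2means :: "'a::euclidean_space set \<Rightarrow> 'a set \<Rightarrow> 'a set \<Rightarrow> bool" where
  "optimal_2means P A B \<longleftrightarrow> two_partition P A B \<and>
     (\<forall>A' B'. two_partition P A' B' \<longrightarrow> cost1 A + cost1 B \<le> cost1 A' + cost1 B')"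

definition rev_pt :: "'a::euclidean_space set \<Rightarrow> 'a set \<Rightarrow> 'a \<Rightarrow> 'a \<Rightarrow> real" where
  "rev_pt A B i j =
     (let M = max (dist i (centroid A)) (dist j (centroid B))
      in if M = 0 then 1 else min (dist i j / M) 1)"

definition rev_set :: "'a::euclidean_space set \<Rightarrow> 'a set \<Rightarrow> real" where
  "rev_set A B = (\<Sum>i\<in>A. \<Sum>j\<in>B. rev_pt A B i j)"

definition HR :: "'a::euclidean_space set \<Rightarrow> 'a set \<Rightarrow> 'a \<Rightarrow> 'a set" where
  "HR A B u = {v \<in> B. rev_pt A B u v \<ge> 1/10}"

definition LR :: "'a::euclidean_space set \<Rightarrow> 'a set \<Rightarrow> 'a \<Rightarrow> 'a set" where
  "LR A B u = B - HR A B u"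

definition high_revenue :: "'a::euclidean_space set \<Rightarrow> 'a set \<Rightarrow> 'a \<Rightarrow> bool" where
  "high_revenue A B u \<longleftrightarrow> real (card (HR A B u)) \<ge> real (card B) / 2"

end

theory Submission
  imports Defs
begin

lemma sum_centroid:
  fixes X :: "'a::euclidean_space set"
  assumes "finite X" "X \<noteq> {}"
  shows "(\<Sum>x\<in>X. x) = real (card X) *\<^sub>R centroid X"
  using assms by (simp add: centroid_def)

lemma parallel:
  fixes X :: "'a::euclidean_space set"
  assumes "finite X" "X \<noteq> {}"
  shows "(\<Sum>x\<in>X. (dist x c)\<^sup>2) = cost1 X + real (card X) * (dist (centroid X) c)\<^sup>2"
proof -
  let ?m = "centroid X"
  have nsq: "(norm (a + b))\<^sup>2 = (norm a)\<^sup>2 + 2 * (a \<bullet> b) + (norm b)\<^sup>2" for a b :: 'a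
    unfolding power2_norm_eq_inner inner_add_left inner_add_right by (simp add: inner_commute[of b a])
  have e: "(dist x c)\<^sup>2 = (dist x ?m)\<^sup>2 + 2 * ((x - ?m) \<bullet> (?m - c)) + (dist ?m c)\<^sup>2" for x
  proof -
    have "(dist x c)\<^sup>2 = (norm ((x - ?m) + (?m - c)))\<^sup>2" by (simp add: dist_norm)
    also have "\<dots> = (norm (x - ?m))\<^sup>2 + 2 * ((x - ?m) \<bullet> (?m - c)) + (norm (?m - c))\<^sup>2"
      by (rule nsq)
    finally show ?thesis by (simp add: dist_norm)
  qed
  have z: "(\<Sum>x\<in>X. (x - ?m) \<bullet> (?m - c)) = 0"
  proof -
    have "(\<Sum>x\<in>X. (x - ?m) \<bullet> (?m - c)) = (\<Sum>x\<in>X. (x - ?m)) \<bullet> (?m - c)"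
      by (simp add: inner_sum_left)
    also have "(\<Sum>x\<in>X. (x - ?m)) = 0"
    proof -
      have "(\<Sum>x\<in>X. (x - ?m)) = (\<Sum>x\<in>X. x) - (\<Sum>x\<in>X. ?m)"
        by (rule sum_subtractf)
      also have "(\<Sum>x\<in>X. ?m) = real (card X) *\<^sub>R ?m"
        by (rule sum_constant_scaleR)
      finally show ?thesis unfolding sum_centroid[OF assms] by simp
    qed
    finally show ?thesis by simp
  qed
  have "(\<Sum>x\<in>X. (dist x c)\<^sup>2) = (\<Sum>x\<in>X. (dist x ?m)\<^sup>2) + 2 * (\<Sum>x\<in>X. (x - ?m) \<bullet> (?m - c))
      + real (card X) * (dist ?m c)\<^sup>2"
  proof -
    have "(\<Sum>x\<in>X. (dist x c)\<^sup>2) = (\<Sum>x\<in>X. (dist x ?m)\<^sup>2 + 2 * ((x - ?m) \<bullet> (?m - c)) + (dist ?m c)\<^sup>2)"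
      by (rule sum.cong[OF refl e])
    thus ?thesis by (simp add: sum.distrib sum_distrib_left)
  qed
  thus ?thesis using z by (simp add: cost1_def)
qed

lemma cost_le:
  fixes X :: "'a::euclidean_space set"
  assumes "finite X"
  shows "cost1 X \<le> (\<Sum>x\<in>X. (dist x c)\<^sup>2)"
proof (cases "X = {}")
  case True thus ?thesis by (simp add: cost1_def)
next
  case False thus ?thesis using parallel[OF assms False, of c] by simp
qed

lemma voronoi:
  fixes P A B :: "'a::euclidean_space set"
  assumes "finite P" "optimal_2means P A B" "v \<in> B"
  shows "dist v (centroid B) \<le> dist v (centroid A)"
proof (cases "B = {v}")
  case True thus ?thesis by (simp add: centroid_def)
next
  case False
  have tp: "two_partition P A B" using assms(2) by (simp add: optimal_2means_def)
  hence fA: "finite A" and fB: "finite B" and dj: "v \<notin> A"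
    using assms(1,3) unfolding two_partition_def by (auto intro: finite_subset)
  have tp2: "two_partition P (insert v A) (B - {v})"
    using tp False assms(3) unfolding two_partition_def by auto
  hence opt: "cost1 A + cost1 B \<le> cost1 (insert v A) + cost1 (B - {v})"
    using assms(2) by (simp add: optimal_2means_def)
  have "cost1 (insert v A) \<le> (\<Sum>x\<in>insert v A. (dist x (centroid A))\<^sup>2)"
    using fA by (intro cost_le) auto
  also have "\<dots> = cost1 A + (dist v (centroid A))\<^sup>2"
    using fA dj by (simp add: cost1_def)
  finally have 1: "cost1 (insert v A) \<le> cost1 A + (dist v (centroid A))\<^sup>2" .
  have "cost1 B = (\<Sum>x\<in>B - {v}. (dist x (centroid B))\<^sup>2) + (dist v (centroid B))\<^sup>2"
    unfolding cost1_def using fB assms(3) by (simp add: sum.remove add.commute)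
  moreover have "cost1 (B - {v}) \<le> (\<Sum>x\<in>B - {v}. (dist x (centroid B))\<^sup>2)"
    using fB by (intro cost_le) auto
  ultimately have "(dist v (centroid B))\<^sup>2 \<le> (dist v (centroid A))\<^sup>2"
    using opt 1 by linarith
  thus ?thesis by (simp add: power2_le_iff_abs_le)
qed

lemma pair:
  fixes A B :: "'a::euclidean_space set"
  assumes V: "dist v (centroid B) \<le> dist v (centroid A)"
    and lo: "rev_pt A B u v < 1/10"
  shows "dist u v < dist u (centroid A) / 9 \<and> dist u (centroid B) \<le> 11/9 * dist u (centroid A)"
proof -
  define r where "r = dist u (centroid A)"
  define s where "s = dist v (centroid B)"
  define M where "M = max r s"
  have M0: "M \<noteq> 0" using lo unfolding rev_pt_def Let_def r_def s_def M_def
    by (auto split: if_splits)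
  have "r \<ge> 0" "s \<ge> 0" by (auto simp: r_def s_def)
  hence Mp: "M > 0" using M0 by (auto simp: M_def)
  have "min (dist u v / M) 1 < 1/10"
    using lo M0 unfolding rev_pt_def Let_def r_def s_def M_def by auto
  hence "dist u v / M < 1/10" by (simp add: min_def split: if_splits)
  hence d: "dist u v < M / 10" using Mp by (simp add: field_simps)
  have t1: "dist u (centroid B) \<le> dist u v + s" unfolding s_def by (rule dist_triangle)
  have t2: "dist v (centroid A) \<le> dist u v + r" unfolding r_def
    using dist_triangle[of v "centroid A" u] by (simp add: dist_commute)
  have Vs: "s \<le> dist v (centroid A)" using V by (simp add: s_def)
  show ?thesis
  proof (cases "s \<le> r")
    case True
    hence "M = r" by (simp add: M_def)
    thus ?thesis using d t1 True \<open>r \<ge> 0\<close> by (simp add: r_def[symmetric])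
  next
    case False
    hence "M = s" by (simp add: M_def)
    hence "s < 10/9 * r" using d t2 Vs by linarith
    thus ?thesis using d t1 \<open>M = s\<close> by (simp add: r_def[symmetric])
  qed
qed

lemma rev_nonneg: "rev_pt A B u v \<ge> 0"
  unfolding rev_pt_def Let_def by (auto simp: min_def le_max_iff_disj intro!: divide_nonneg_nonneg)

theorem mainTheorem3:
  fixes P A B :: "'a::euclidean_space set"
  assumes "finite P"
    and "optimal_2means P A B"
    and "card A \<ge> card B"
  shows "real (card {u \<in> A. high_revenue A B u}) \<ge> 4/7 * real (card A) \<and>
         rev_set A B \<ge> 1/35 * real (card A) * real (card B)"
proof -
  have tp: "two_partition P A B" using assms(2) by (simp add: optimal_2means_def)
  hence fA: "finite A" and fB: "finite B" and Ane: "A \<noteq> {}" and Bne: "B \<noteq> {}"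
    and dj: "A \<inter> B = {}" and un: "A \<union> B = P"
    using assms(1) unfolding two_partition_def by (auto intro: finite_subset)
  define cA where "cA = centroid A"
  define cB where "cB = centroid B"
  define r where "r u = dist u cA" for u
  have V: "dist v cB \<le> dist v cA" if "v \<in> B" for v
    using voronoi[OF assms(1,2) that] by (simp add: cA_def cB_def)
  define H where "H = {u \<in> A. high_revenue A B u}"
  define L where "L = {u \<in> A. \<not> high_revenue A B u}"
  have fL: "finite L" and fH: "finite H" using fA by (auto simp: L_def H_def)
  have HL: "H \<union> L = A" "H \<inter> L = {}" by (auto simp: H_def L_def)
  hence cardHL: "card H + card L = card A" using fL fH card_Un_disjoint by metis
  have LRsub: "LR A B u \<subseteq> B" for u by (auto simp: LR_def)
  have LRlow: "rev_pt A B u v < 1/10" if "v \<in> LR A B u" for u v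
    using that by (auto simp: LR_def HR_def)
  have LRcard: "real (card (LR A B u)) > real (card B) / 2" if "u \<in> L" for u
  proof -
    have sub: "HR A B u \<subseteq> B" by (auto simp: HR_def)
    have fHR: "finite (HR A B u)" using fB sub by (rule finite_subset[rotated])
    have "card (LR A B u) = card B - card (HR A B u)" "card (HR A B u) \<le> card B"
      unfolding LR_def using card_Diff_subset[OF fHR sub] card_mono[OF fB sub] by auto
    moreover have "real (card (HR A B u)) < real (card B) / 2"
      using that by (auto simp: L_def high_revenue_def)
    ultimately show ?thesis by (simp add: of_nat_diff)
  qed
  have close: "dist u v < r u / 9 \<and> dist u cB \<le> 11/9 * r u" if "u \<in> A" "v \<in> LR A B u" for u v
  proof -
    have "v \<in> B" using that LRsub by auto
    hence "dist v (centroid B) \<le> dist v (centroid A)" using V by (simp add: cA_def cB_def)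
    from pair[OF this LRlow[OF that(2)]] show ?thesis by (simp add: r_def cA_def cB_def)
  qed
  have LRne: "LR A B u \<noteq> {}" if "u \<in> L" for u
    using LRcard[OF that] by (auto)
  have rpos: "r u > 0" if uL: "u \<in> L" for u
  proof -
    obtain v where "v \<in> LR A B u" using LRne[OF uL] by auto
    hence "dist u v < r u / 9" using close[of u v] uL by (auto simp: L_def)
    thus ?thesis using zero_le_dist[of u v] by linarith
  qed
  have shared: "\<exists>v. v \<in> LR A B u \<and> v \<in> LR A B u'" if "u \<in> L" "u' \<in> L" for u u'
  proof (rule ccontr)
    assume "\<not> ?thesis"
    hence "LR A B u \<inter> LR A B u' = {}" by auto
    hence "card (LR A B u \<union> LR A B u') = card (LR A B u) + card (LR A B u')"
      using fB LRsub by (intro card_Un_disjoint) (auto intro: finite_subset)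
    moreover have "card (LR A B u \<union> LR A B u') \<le> card B"
      using fB LRsub by (intro card_mono) auto
    ultimately show False using LRcard[OF that(1)] LRcard[OF that(2)] by linarith
  qed
  have pw: "(dist u u')\<^sup>2 \<le> 2/81 * ((r u)\<^sup>2 + (r u')\<^sup>2)" if uu: "u \<in> L" "u' \<in> L" for u u'
  proof -
    obtain v where v: "v \<in> LR A B u" "v \<in> LR A B u'" using shared[OF uu] by auto
    have "dist u v < r u / 9" "dist u' v < r u' / 9"
      using close[OF _ v(1)] close[OF _ v(2)] uu by (auto simp: L_def)
    hence d: "dist u u' \<le> (r u + r u') / 9"
      using dist_triangle[of u u' v] by (simp add: dist_commute)
    have "(dist u u')\<^sup>2 \<le> ((r u + r u') / 9)\<^sup>2"
      using d by (intro power_mono) auto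
    also have "\<dots> \<le> 2/81 * ((r u)\<^sup>2 + (r u')\<^sup>2)"
    proof -
      have "((r u + r u') / 9)\<^sup>2 = ((r u)\<^sup>2 + (r u')\<^sup>2 + 2 * r u * r u') / 81"
        by (simp add: power2_eq_square field_simps)
      moreover have "2 * r u * r u' \<le> (r u)\<^sup>2 + (r u')\<^sup>2" by (rule sum_squares_bound)
      ultimately show ?thesis by simp
    qed
    finally show ?thesis .
  qed
  have main: "119 * real (card L) \<le> 40 * real (card A)"
  proof (cases "L = {}")
    case True thus ?thesis by simp
  next
    case Lne: False
    define R where "R = (\<Sum>u\<in>L. (r u)\<^sup>2)"
    define C where "C = cost1 L"
    define n where "n = real (card L)"
    have npos: "n > 0" using Lne fL by (simp add: n_def card_gt_0_iff)
    have Rpos: "R > 0"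
    proof -
      obtain u where u: "u \<in> L" using Lne by auto
      have "(r u)\<^sup>2 \<le> R" unfolding R_def using fL u
        by (intro member_le_sum) auto
      thus ?thesis using rpos[OF u] by (smt (verit) zero_less_power)
    qed
    have CR: "C \<le> 2 * R / 81"
    proof -
      have inner: "(\<Sum>u'\<in>L. (dist u' u)\<^sup>2) = C + n * (dist (centroid L) u)\<^sup>2" for u
        using parallel[OF fL Lne, of u] by (simp add: C_def n_def)
      have "(\<Sum>u\<in>L. \<Sum>u'\<in>L. (dist u' u)\<^sup>2) = (\<Sum>u\<in>L. C + n * (dist (centroid L) u)\<^sup>2)"
        by (simp add: inner)
      also have "\<dots> = n * C + n * C"
        by (simp add: sum.distrib sum_distrib_left[symmetric] n_def C_def cost1_def dist_commute)
      finally have e: "(\<Sum>u\<in>L. \<Sum>u'\<in>L. (dist u' u)\<^sup>2) = 2 * n * C" by simp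
      have "(\<Sum>u\<in>L. \<Sum>u'\<in>L. (dist u' u)\<^sup>2) \<le> (\<Sum>u\<in>L. \<Sum>u'\<in>L. 2/81 * ((r u')\<^sup>2 + (r u)\<^sup>2))"
        by (intro sum_mono pw) auto
      also have "\<dots> = (\<Sum>u\<in>L. 2/81 * R + 2/81 * n * (r u)\<^sup>2)"
      proof (rule sum.cong[OF refl])
        fix u
        have "(\<Sum>u'\<in>L. 2/81 * ((r u')\<^sup>2 + (r u)\<^sup>2)) = (\<Sum>u'\<in>L. 2/81 * (r u')\<^sup>2) + (\<Sum>u'\<in>L. 2/81 * (r u)\<^sup>2)"
          by (simp add: distrib_left sum.distrib)
        also have "\<dots> = 2/81 * R + 2/81 * n * (r u)\<^sup>2"
          by (simp add: R_def n_def sum_distrib_left)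
        finally show "(\<Sum>u'\<in>L. 2/81 * ((r u')\<^sup>2 + (r u)\<^sup>2)) = 2/81 * R + 2/81 * n * (r u)\<^sup>2" .
      qed
      also have "\<dots> = n * (2/81 * R) + 2/81 * n * R"
        by (simp add: sum.distrib R_def n_def sum_distrib_left)
      also have "\<dots> = 2/81 * (n * R + n * R)" by (simp add: algebra_simps)
      finally have "2 * n * C \<le> 4 / 81 * n * R" using e by simp
      thus ?thesis using npos by (simp add: field_simps)
    qed
    have RC: "n * (dist (centroid L) cA)\<^sup>2 = R - C"
      using parallel[OF fL Lne, of cA] by (simp add: R_def C_def n_def r_def)
    show ?thesis
    proof (cases "L = A")
      case True
      hence "centroid L = cA" by (simp add: cA_def)
      thus ?thesis using RC CR Rpos by simp
    next
      case LA: False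
      have ALne: "A - L \<noteq> {}" using LA by (auto simp: L_def)
      have fAL: "finite (A - L)" using fA by simp
      define m where "m = real (card (A - L))"
      have LsubA: "L \<subseteq> A" by (auto simp: L_def)
      have cardm: "card (A - L) + card L = card A"
        using card_Diff_subset[OF fL LsubA] card_mono[OF fA LsubA] by simp
      have tp2: "two_partition P (A - L) (B \<union> L)"
        using tp ALne un by (auto simp: two_partition_def L_def)
      hence opt: "cost1 A + cost1 B \<le> cost1 (A - L) + cost1 (B \<union> L)"
        using assms(2) by (simp add: optimal_2means_def)
      define c' where "c' = centroid (A - L)"
      define cL where "cL = centroid L"
      have "cost1 A = (\<Sum>x\<in>A - L. (dist x cA)\<^sup>2) + (\<Sum>x\<in>L. (dist x cA)\<^sup>2)"
        unfolding cost1_def cA_def[symmetric]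
        using fA LsubA by (metis sum.subset_diff)
      also have "(\<Sum>x\<in>A - L. (dist x cA)\<^sup>2) = cost1 (A - L) + m * (dist c' cA)\<^sup>2"
        using parallel[OF fAL ALne, of cA] by (simp add: m_def c'_def)
      finally have cA_eq: "cost1 A = cost1 (A - L) + m * (dist c' cA)\<^sup>2 + R"
        by (simp add: R_def r_def)
      define W where "W = (\<Sum>x\<in>L. (dist x cB)\<^sup>2)"
      have "cost1 (B \<union> L) \<le> (\<Sum>x\<in>B \<union> L. (dist x cB)\<^sup>2)"
        using fB fL by (intro cost_le) auto
      also have "\<dots> = cost1 B + W"
        unfolding W_def cost1_def cB_def
        using fB fL dj LsubA by (subst sum.union_disjoint) auto
      finally have cBL: "cost1 (B \<union> L) \<le> cost1 B + W" .
      have WR: "W \<le> 121/81 * R"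
      proof -
        have "W \<le> (\<Sum>x\<in>L. (11/9 * r x)\<^sup>2)"
          unfolding W_def
        proof (intro sum_mono power_mono)
          fix x assume x: "x \<in> L"
          then obtain v where "v \<in> LR A B x" using LRne by blast
          thus "dist x cB \<le> 11/9 * r x" using close[of x v] x by (auto simp: L_def)
        qed auto
        also have "\<dots> = 121/81 * R"
          by (simp add: R_def power_mult_distrib power_divide sum_distrib_left)
        finally show ?thesis .
      qed
      have ineq: "m * (dist c' cA)\<^sup>2 + R \<le> 121/81 * R"
        using opt cA_eq cBL WR by linarith
      have vec: "m *\<^sub>R (c' - cA) = - (n *\<^sub>R (cL - cA))"
      proof -
        have "(\<Sum>x\<in>A. x) = (\<Sum>x\<in>A - L. x) + (\<Sum>x\<in>L. x)"
          using fA LsubA by (metis sum.subset_diff)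
        hence "real (card A) *\<^sub>R cA = m *\<^sub>R c' + n *\<^sub>R cL"
          using sum_centroid[OF fA Ane] sum_centroid[OF fAL ALne] sum_centroid[OF fL Lne]
          by (simp add: cA_def m_def c'_def n_def cL_def)
        moreover have "real (card A) = m + n" using cardm by (simp add: m_def n_def flip: of_nat_add)
        ultimately show ?thesis by (simp add: algebra_simps scaleR_add_left)
      qed
      have "(m * dist c' cA) = n * dist cL cA"
      proof -
        have "norm (m *\<^sub>R (c' - cA)) = norm (n *\<^sub>R (cL - cA))" using vec by simp
        moreover have "m \<ge> 0" "n \<ge> 0" by (auto simp: m_def n_def)
        ultimately show ?thesis by (simp add: dist_norm)
      qed
      hence sq: "m * (m * (dist c' cA)\<^sup>2) = n * (n * (dist cL cA)\<^sup>2)"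
        by (simp add: power2_eq_square algebra_simps) (metis mult.assoc mult.commute)
      have mpos: "m \<ge> 0" by (simp add: m_def)
      have "m * (m * (dist c' cA)\<^sup>2 + R) \<le> m * (121/81 * R)"
        using ineq mpos by (rule mult_left_mono)
      hence "n * (R - C) + m * R \<le> m * (121/81 * R)"
        using sq RC by (simp add: cL_def distrib_left)
      moreover have "n * (79/81 * R) \<le> n * (R - C)"
        using CR npos by (intro mult_left_mono) auto
      ultimately have "(79 * n) * R \<le> (40 * m) * R" by (simp add: algebra_simps)
      hence "79 * n \<le> 40 * m" using Rpos by simp
      moreover have "m + n = real (card A)" using cardm by (simp add: m_def n_def flip: of_nat_add)
      ultimately show ?thesis by (simp add: n_def)
    qed
  qed
  have part1: "real (card H) \<ge> 4/7 * real (card A)"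
  proof -
    have "real (card H) = real (card A) - real (card L)" using cardHL by (simp flip: of_nat_add)
    thus ?thesis using main by simp
  qed
  have rowH: "(\<Sum>j\<in>B. rev_pt A B u j) \<ge> real (card B) / 20" if "u \<in> H" for u
  proof -
    have sub: "HR A B u \<subseteq> B" by (auto simp: HR_def)
    have "real (card B) / 20 \<le> real (card (HR A B u)) / 10"
      using that by (simp add: H_def high_revenue_def)
    also have "\<dots> = (\<Sum>j\<in>HR A B u. 1/10)" by simp
    also have "\<dots> \<le> (\<Sum>j\<in>HR A B u. rev_pt A B u j)"
      by (intro sum_mono) (auto simp: HR_def)
    also have "\<dots> \<le> (\<Sum>j\<in>B. rev_pt A B u j)"
      using fB sub by (intro sum_mono2) (auto simp: rev_nonneg)
    finally show ?thesis .
  qed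
  have "rev_set A B \<ge> (\<Sum>i\<in>H. \<Sum>j\<in>B. rev_pt A B i j)"
    unfolding rev_set_def using fA HL
    by (intro sum_mono2) (auto intro: sum_nonneg rev_nonneg)
  moreover have "(\<Sum>i\<in>H. \<Sum>j\<in>B. rev_pt A B i j) \<ge> (\<Sum>i\<in>H. real (card B) / 20)"
    by (intro sum_mono rowH)
  moreover have "(\<Sum>i\<in>H. real (card B) / 20) = real (card H) * real (card B) / 20" by simp
  moreover have "real (card H) * real (card B) / 20 \<ge> 4/7 * real (card A) * real (card B) / 20"
    using part1 by (intro divide_right_mono mult_right_mono) auto
  ultimately have "rev_set A B \<ge> 1/35 * real (card A) * real (card B)" by simp
  thus ?thesis using part1 by (simp add: H_def)
qed

end
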